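(* Let $n,k$ be positive integers with $n\ge 3k$, and let $\mathcal F\subset\binom{[n]}{k}$ be an intersecting family with $|\mathcal F|\le \binom{n-1}{k-1}/(2k)$. Then $$|\mathcal D(\mathcal F)|\le\sum_{0\le \ell<k}\binom{n-1}{\ell}.$$
   Context: $[n]=\{1,\dots,n\}$; $\binom{[n]}{k}$ is the family of all $k$-element subsets of $[n]$. A family $\mathcal F$ is intersecting if $F\cap F'\neq\varnothing$ for all $F,F'\in\mathcal F$. $\mathcal D(\mathcal F):=\{F\setminus F' : F,F'\in\mathcal F\}$. *)

theory Defs
  imports Complex_Main
begin

definition intersecting :: "'a set set \<Rightarrow> bool" where
  "intersecting \<F> \<longleftrightarrow> (\<forall>F\<in>\<F>. \<forall>F'\<in>\<F>. F \<inter> F' \<noteq> {})"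

definition diff_family :: "'a set set \<Rightarrow> 'a set set" where
  "diff_family \<F> = {F - F' | F F'. F \<in> \<F> \<and> F' \<in> \<F>}"

end

theory Submission
  imports Defs
begin

lemma sum_choose_Suc:
  "(\<Sum>l<Suc m. Suc N choose l) = (\<Sum>l<Suc m. N choose l) + (\<Sum>l<m. N choose l)"
  by (induction m) auto

lemma choose_step:
  assumes "2 * (j + 1) \<le> N - j"
  shows "2 * (N choose j) \<le> N choose (Suc j)"
proof -
  have e: "Suc j * (N choose Suc j) = (N - j) * (N choose j)"
    using binomial_absorption[of j N] binomial_absorb_comp[of N j] by simp
  have "Suc j * (2 * (N choose j)) \<le> (N - j) * (N choose j)"
    using mult_right_mono[OF assms, of "N choose j"] by (simp add: algebra_simps)
  then have "Suc j * (2 * (N choose j)) \<le> Suc j * (N choose Suc j)"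
    using e by simp
  then show ?thesis by (simp only: mult_le_cancel1)
qed

lemma sum_choose_le:
  assumes "\<And>j. j < m \<Longrightarrow> 2 * (N choose j) \<le> N choose (Suc j)"
  shows "(\<Sum>l<m. N choose l) \<le> N choose m"
  using assms
proof (induction m)
  case 0 then show ?case by simp
next
  case (Suc m)
  have "(\<Sum>l<Suc m. N choose l) = (\<Sum>l<m. N choose l) + (N choose m)" by simp
  also have "\<dots> \<le> 2 * (N choose m)" using Suc by simp
  also have "\<dots> \<le> N choose Suc m" using Suc.prems by simp
  finally show ?case .
qed

theorem mainTheorem3:
  fixes n k :: nat and \<F> :: "nat set set"
  assumes "k \<ge> 1" and "n \<ge> 3 * k"
    and "\<F> \<subseteq> {A. A \<subseteq> {1..n} \<and> card A = k}"
    and "intersecting \<F>"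
    and "real (card \<F>) \<le> real ((n - 1) choose (k - 1)) / (2 * real k)"
  shows "card (diff_family \<F>) \<le> (\<Sum>l<k. (n - 1) choose l)"
proof -
  define N where "N = n - 1"
  have nN: "n = Suc N" using assms(1,2) N_def by simp
  define S1 where "S1 = (\<Union>l<k-1. {G. G \<subseteq> {1..n} \<and> card G = l})"
  define S2 where "S2 = (\<Union>F\<in>\<F>. (\<lambda>x. F - {x}) ` F)"
  have finF: "finite \<F>"
    by (rule finite_subset[OF assms(3)]) (auto intro: finite_subset[of _ "Pow {1..n}"])
  have sub: "diff_family \<F> \<subseteq> S1 \<union> S2"
  proof
    fix D assume "D \<in> diff_family \<F>"
    then obtain F F' where D: "D = F - F'" "F \<in> \<F>" "F' \<in> \<F>"
      unfolding diff_family_def by blast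
    have F: "F \<subseteq> {1..n}" "card F = k" using D assms(3) by auto
    have finF1: "finite F" using F(1) finite_subset by blast
    have ne: "F \<inter> F' \<noteq> {}" using assms(4) D unfolding intersecting_def by blast
    have psub: "D \<subset> F" using D ne by blast
    have cD: "card D < k" using psubset_card_mono[OF finF1 psub] F by simp
    show "D \<in> S1 \<union> S2"
    proof (cases "card D < k - 1")
      case True
      then show ?thesis using psub F unfolding S1_def by auto
    next
      case False
      then have cD': "card D = k - 1" using cD by simp
      have "card (F - D) = 1"
        using card_Diff_subset[of D F] psub finF1 cD' F(2) assms(1)
        by (simp add: finite_subset less_imp_le)
      then obtain x where x: "F - D = {x}" by (auto simp: card_Suc_eq)
      have "D = F - {x}" using x psub by blast
      moreover have "x \<in> F" using x by blast
      ultimately show ?thesis using D(2) unfolding S2_def by blast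
    qed
  qed
  have fin1: "finite S1" unfolding S1_def
    by (auto intro: finite_subset[of _ "Pow {1..n}"])
  have fin2: "finite S2" unfolding S2_def using finF assms(3)
    by (force intro!: finite_imageI intro: finite_subset[of _ "{1..n}"])
  have c1: "card S1 \<le> (\<Sum>l<k-1. n choose l)"
  proof -
    have "card S1 \<le> (\<Sum>l<k-1. card {G. G \<subseteq> {1..n} \<and> card G = l})"
      unfolding S1_def by (rule card_UN_le) simp
    also have "\<dots> = (\<Sum>l<k-1. n choose l)" by (simp add: n_subsets)
    finally show ?thesis .
  qed
  have c2: "card S2 \<le> k * card \<F>"
  proof -
    have "card S2 \<le> (\<Sum>F\<in>\<F>. card ((\<lambda>x. F - {x}) ` F))"
      unfolding S2_def by (rule card_UN_le[OF finF])
    also have "\<dots> \<le> (\<Sum>F\<in>\<F>. card F)" using assms(3) by (intro sum_mono card_image_le) (auto intro: finite_subset)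
    also have "\<dots> = (\<Sum>F\<in>\<F>. k)" using assms(3) by (intro sum.cong) auto
    finally show ?thesis by (simp add: mult.commute)
  qed
  have cD: "card (diff_family \<F>) \<le> (\<Sum>l<k-1. n choose l) + k * card \<F>"
    using card_mono[OF _ sub] fin1 fin2 card_Un_le[of S1 S2] c1 c2 by fastforce
  have kF: "real (2 * (k * card \<F>)) \<le> real (N choose (k - 1))"
    using assms(5) assms(1) unfolding N_def[symmetric]
    by (simp add: field_simps)
  show ?thesis
  proof (cases "k = 1")
    case True
    then have "2 * (k * card \<F>) \<le> 1" using kF by simp
    then have "k * card \<F> = 0" by linarith
    then show ?thesis using cD True by simp
  next
    case False
    define m where "m = k - 2"
    have km: "k = Suc (Suc m)" using False assms(1) m_def by simp
    have steps: "\<And>j. j < Suc m \<Longrightarrow> 2 * (N choose j) \<le> N choose (Suc j)"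
      by (rule choose_step) (use assms(2) nN km in simp)
    have s1: "(\<Sum>l<m. N choose l) \<le> N choose m"
      by (rule sum_choose_le) (use steps in simp)
    have s2: "2 * (N choose m) \<le> N choose Suc m" using steps by simp
    have kF': "2 * (k * card \<F>) \<le> N choose Suc m" using kF km by (simp only: of_nat_le_iff) simp
    have "card (diff_family \<F>) \<le> (\<Sum>l<Suc m. N choose l) + (\<Sum>l<m. N choose l) + k * card \<F>"
      using cD sum_choose_Suc[where m=m and N=N] unfolding km nN by (simp only: diff_Suc_1)
    also have "\<dots> \<le> (\<Sum>l<Suc m. N choose l) + (N choose Suc m)"
      using s1 s2 kF' by linarith
    also have "\<dots> = (\<Sum>l<k. (n - 1) choose l)" using km N_def by simp
    finally show ?thesis .
  qed
qed

end
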